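(* With the notation of the context, as formal power series in the two variables $x$ and $q$, $$\sum_{\lambda\in\mathcal{D}}(-1)^{n_\lambda}x^{m_\lambda+n_\lambda}q^{N_\lambda} =1+\sum_{r=1}^\infty(-1)^r\Big[x^{3r-1}q^{r(3r-1)/2}+x^{3r}q^{r(3r+1)/2}\Big].$$
   Context: $\mathcal{D}$ denotes the set of all partitions into distinct parts (of all nonnegative integers, including the empty partition of $0$). For $\lambda\in\mathcal{D}$, $N_\lambda$ is the integer partitioned by $\lambda$, $n_\lambda$ is the number of parts of $\lambda$, and $m_\lambda$ is the largest part of $\lambda$ (with $m_\lambda=0$ for the empty partition). *)

theory Defs
  imports Main
begin

text \<open>A partition into distinct parts is represented by the (finite) set of its parts,
  all of which are positive integers. The empty set is the empty partition of 0.\<close>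

definition distinct_partitions :: "nat set set" where
  "distinct_partitions = {S. finite S \<and> 0 \<notin> S}"

definition part_N :: "nat set \<Rightarrow> nat" where
  "part_N S = \<Sum>S"

definition part_n :: "nat set \<Rightarrow> nat" where
  "part_n S = card S"

definition part_m :: "nat set \<Rightarrow> nat" where
  "part_m S = (if S = {} then 0 else Max S)"

end

theory Submission
  imports Defs
begin

definition sig :: "nat set \<Rightarrow> nat" where
  "sig S = (LEAST t. Max S - t \<notin> S)"

definition up :: "nat set \<Rightarrow> nat set" where
  "up S = insert (Max S + 1) (S - {Min S, Max S + 1 - Min S})"

definition down :: "nat set \<Rightarrow> nat set" where
  "down S = insert (sig S) (insert (Max S - sig S) (S - {Max S}))"

definition fr :: "nat set \<Rightarrow> nat set" where
  "fr S = (if Min S \<le> sig S then up S else down S)"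

definition exc :: "nat set \<Rightarrow> bool" where
  "exc S = (S = {} \<or> (Min S \<le> sig S \<and> Max S + 1 = 2 * Min S)
               \<or> (sig S < Min S \<and> Max S = 2 * sig S))"

lemma sig_props:
  assumes "finite S" "0 \<notin> S" "S \<noteq> {}"
  shows "Max S - sig S \<notin> S" "\<And>i. i < sig S \<Longrightarrow> Max S - i \<in> S" "1 \<le> sig S"
    "sig S \<le> Max S" "Min S \<le> Max S + 1 - sig S"
proof -
  have e: "Max S - Max S \<notin> S" using assms by simp
  show a: "Max S - sig S \<notin> S" unfolding sig_def by (rule LeastI[of _ "Max S"]) (rule e)
  show b: "\<And>i. i < sig S \<Longrightarrow> Max S - i \<in> S" unfolding sig_def using not_less_Least by blast
  show c: "sig S \<le> Max S" unfolding sig_def by (rule Least_le) (rule e)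
  have mS: "Max S \<in> S" using assms by simp
  show d: "1 \<le> sig S" using a mS by (cases "sig S") auto
  have "Max S - (sig S - 1) \<in> S" by (rule b) (use d in simp)
  hence "Min S \<le> Max S - (sig S - 1)" using assms by simp
  thus "Min S \<le> Max S + 1 - sig S" using c d by linarith
qed

lemma upL:
  assumes V: "finite S" "0 \<notin> S" "S \<noteq> {}" and h: "Min S \<le> sig S" "Max S + 1 \<noteq> 2 * Min S"
  shows "finite (up S)" "0 \<notin> up S" "up S \<noteq> {}" "Max (up S) = Max S + 1"
    "sig (up S) = Min S" "sig (up S) < Min (up S)" "Max (up S) \<noteq> 2 * sig (up S)"
    "down (up S) = S" "\<Sum>(up S) = \<Sum>S" "card (up S) + 1 = card S"
proof -
  define m s t where "m = Max S" and "s = Min S" and "t = Max S + 1 - Min S"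
  note sp = sig_props[OF V]
  have sS: "s \<in> S" "m \<in> S" using V unfolding s_def m_def by auto
  have s1: "s \<ge> 1" using sS V by (cases s) auto
  have sm: "s \<le> m" using V sS unfolding s_def by simp
  have ge: "\<And>x. x \<in> S \<Longrightarrow> s \<le> x" "\<And>x. x \<in> S \<Longrightarrow> x \<le> m" using V unfolding s_def m_def by auto
  have "m - (s - 1) \<in> S" using sp(2)[of "s-1"] h(1) s1 unfolding m_def s_def by simp
  moreover have "m - (s - 1) = t" using s1 sm unfolding t_def m_def s_def by simp
  ultimately have tS: "t \<in> S" by simp
  have st: "s < t" using ge(1)[OF tS] h(2) unfolding t_def s_def m_def by linarith
  have tm: "t \<le> m" using s1 sm unfolding t_def m_def s_def by simp
  have m1: "m + 1 \<notin> S" using ge(2) by fastforce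
  have upd: "up S = insert (m+1) (S - {s,t})" unfolding up_def m_def s_def t_def by simp
  show f: "finite (up S)" using V upd by simp
  show "0 \<notin> up S" using V upd by simp
  show ne: "up S \<noteq> {}" using upd by simp
  have mx: "Max (up S) = m + 1" unfolding upd using V ge(2)
    by (intro Max_eqI) fastforce+
  thus "Max (up S) = Max S + 1" unfolding m_def .
  have sg: "sig (up S) = s" unfolding sig_def
  proof (rule Least_equality)
    show "Max (up S) - s \<notin> up S" using mx st m1 t_def s_def m_def upd sm s1 by auto
  next
    fix y assume y: "Max (up S) - y \<notin> up S"
    show "s \<le> y"
    proof (rule ccontr)
      assume "\<not> s \<le> y"
      hence ys: "y < s" by simp
      show False
      proof (cases y)
        case 0 then show ?thesis using y mx upd by simp
      next
        case (Suc z)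
        have "m - z \<in> S" using sp(2)[of z] h(1) ys Suc unfolding m_def s_def by simp
        moreover have "m - z = Max (up S) - y" using mx Suc ys sm by simp
        moreover have "m - z \<noteq> s" "m - z \<noteq> t" using Suc ys sm st unfolding t_def m_def s_def by auto
        ultimately show ?thesis using y upd by auto
      qed
    qed
  qed
  thus "sig (up S) = Min S" unfolding s_def .
  have "\<And>x. x \<in> up S \<Longrightarrow> s < x" using upd ge(1) sm by fastforce
  hence "s < Min (up S)" using f ne by simp
  thus "sig (up S) < Min (up S)" using sg by simp
  show "Max (up S) \<noteq> 2 * sig (up S)" using mx sg st unfolding t_def m_def s_def by linarith
  have "down (up S) = insert s (insert t (S - {s,t}))"
    unfolding down_def sg mx using upd m1 sm unfolding t_def m_def s_def by auto
  also have "\<dots> = S" using sS tS by auto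
  finally show "down (up S) = S" .
  have "\<Sum>S = s + (t + \<Sum>(S - {s,t}))"
    using V sS tS st by (simp add: sum.remove[of S s] sum.remove[of "S - {s}" t] Diff_insert2[symmetric] insert_commute)
  moreover have "\<Sum>(up S) = (m+1) + \<Sum>(S - {s,t})" using upd V m1 by simp
  ultimately show "\<Sum>(up S) = \<Sum>S" using st unfolding t_def m_def s_def by linarith
  have "card {s,t} \<le> card S" using V sS tS by (intro card_mono) auto
  hence "card S = card (S - {s,t}) + 2" using V sS tS st by (simp add: card_Diff_subset)
  moreover have "card (up S) = card (S - {s,t}) + 1" using upd V m1 by simp
  ultimately show "card (up S) + 1 = card S" by simp
qed

lemma downL:
  assumes V: "finite S" "0 \<notin> S" "S \<noteq> {}" and h: "sig S < Min S" "Max S \<noteq> 2 * sig S"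
  shows "finite (down S)" "0 \<notin> down S" "down S \<noteq> {}" "Max (down S) + 1 = Max S"
    "Min (down S) = sig S" "Min (down S) \<le> sig (down S)" "Max (down S) + 1 \<noteq> 2 * Min (down S)"
    "up (down S) = S" "\<Sum>(down S) = \<Sum>S" "card (down S) = card S + 1"
proof -
  define m g u where "m = Max S" and "g = sig S" and "u = Max S - sig S"
  note sp = sig_props[OF V]
  have mS: "m \<in> S" using V unfolding m_def by auto
  have ge: "\<And>x. x \<in> S \<Longrightarrow> Min S \<le> x" "\<And>x. x \<in> S \<Longrightarrow> x \<le> m" using V unfolding m_def by auto
  have g1: "g \<ge> 1" "g \<le> m" using sp unfolding g_def m_def by auto
  have uS: "u \<notin> S" using sp(1) unfolding u_def by simp
  have gS: "g \<notin> S" using ge(1) h(1) unfolding g_def by fastforce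
  have gu: "g < u" using sp(5) h unfolding g_def u_def by linarith
  have um: "u < m" using g1 unfolding u_def m_def g_def by simp
  have dd: "down S = insert g (insert u (S - {m}))" unfolding down_def m_def g_def u_def by simp
  show f: "finite (down S)" using V dd by simp
  show "0 \<notin> down S" using V dd g1 gu by simp
  show ne: "down S \<noteq> {}" using dd by simp
  have m1in: "m - 1 \<in> down S"
  proof (cases "g = 1")
    case True then show ?thesis using dd unfolding u_def m_def g_def by simp
  next
    case False
    hence "m - 1 \<in> S" using sp(2)[of 1] g1 unfolding m_def g_def by simp
    moreover have "m - 1 \<noteq> m" using um by simp
    ultimately show ?thesis using dd by simp
  qed
  have mx: "Max (down S) = m - 1"
  proof (rule Max_eqI[OF f _ m1in])
    fix y assume "y \<in> down S"
    hence "y = g \<or> y = u \<or> (y \<in> S \<and> y \<noteq> m)" using dd by auto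
    then show "y \<le> m - 1" using gu um ge(2)[of y] by auto
  qed
  thus "Max (down S) + 1 = Max S" using um unfolding m_def by simp
  have gin: "g \<in> down S" using dd by simp
  have mn: "Min (down S) = g"
  proof (rule Min_eqI[OF f _ gin])
    fix y assume "y \<in> down S"
    hence "y = g \<or> y = u \<or> (y \<in> S \<and> y \<noteq> m)" using dd by auto
    then show "g \<le> y" using gu ge(1)[of y] h(1) unfolding g_def by auto
  qed
  thus "Min (down S) = sig S" unfolding g_def .
  have V2: "finite (down S)" "0 \<notin> down S" "down S \<noteq> {}" using f ne V dd g1 gu by auto
  note sp2 = sig_props[OF V2]
  show "Min (down S) \<le> sig (down S)"
  proof (rule ccontr)
    assume "\<not> Min (down S) \<le> sig (down S)"
    hence lt: "sig (down S) < g" using mn by simp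
    have nin: "(m - 1) - sig (down S) \<notin> down S" using sp2(1) mx by simp
    show False
    proof (cases "sig (down S) = g - 1")
      case True
      hence "(m - 1) - sig (down S) = u" using g1 um unfolding u_def m_def g_def by simp
      thus False using nin dd by simp
    next
      case False
      hence "(m - 1) - sig (down S) = m - (sig (down S) + 1)" by simp
      moreover have "m - (sig (down S) + 1) \<in> S" using sp(2)[of "sig (down S) + 1"] lt False
        unfolding m_def g_def by simp
      moreover have "m - (sig (down S) + 1) \<noteq> m" using g1 lt by simp
      ultimately show False using nin dd by auto
    qed
  qed
  show "Max (down S) + 1 \<noteq> 2 * Min (down S)" using mx mn h(2) um unfolding m_def g_def by simp
  have "up (down S) = insert m (S - {m})"
    unfolding up_def mx mn using um gu dd gS uS unfolding u_def m_def g_def by auto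
  also have "\<dots> = S" using mS by auto
  finally show "up (down S) = S" .
  have "\<Sum>S = m + \<Sum>(S - {m})" using V mS by (simp add: sum.remove)
  moreover have "\<Sum>(down S) = g + (u + \<Sum>(S - {m}))" using dd V gS uS gu by simp
  ultimately show "\<Sum>(down S) = \<Sum>S" using g1 unfolding u_def m_def g_def by simp
  have "card S > 0" using V by (simp add: card_gt_0_iff)
  hence "card S = card (S - {m}) + 1" using V mS by simp
  moreover have "card (down S) = card (S - {m}) + 2" using dd V gS uS gu by simp
  ultimately show "card (down S) = card S + 1" by simp
qed

lemma inv_sum_zero:
  fixes w :: "'a \<Rightarrow> int"
  assumes "\<And>x. x \<in> X \<Longrightarrow> f x \<in> X" "\<And>x. x \<in> X \<Longrightarrow> f (f x) = x"
    "\<And>x. x \<in> X \<Longrightarrow> w (f x) = - w x"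
  shows "sum w X = 0"
proof -
  have "sum w X = sum (\<lambda>x. - w x) X"
    by (rule sum.reindex_bij_witness[where i=f and j=f]) (use assms in auto)
  also have "\<dots> = - sum w X" by (simp add: sum_negf)
  finally show ?thesis by simp
qed

lemma gauss_int: "2 * \<Sum>{a..<a+n} + n = n * (2 * a + (n::nat))"
proof (induction n)
  case (Suc n)
  have "\<Sum>{a..<a + Suc n} = \<Sum>{a..<a+n} + (a + n)" by simp
  then show ?case using Suc by (simp add: algebra_simps)
qed simp

lemma pent1:
  assumes "r \<ge> (1::nat)"
  shows "{r..<2*r} \<in> distinct_partitions" "part_N {r..<2*r} = r*(3*r-1) div 2"
    "part_m {r..<2*r} + part_n {r..<2*r} = 3*r-1" "part_n {r..<2*r} = r" "exc {r..<2*r}"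
proof -
  let ?S = "{r..<2*r}"
  show "?S \<in> distinct_partitions" using assms unfolding distinct_partitions_def by auto
  have g: "2 * \<Sum>{r..<r+r} + r = r * (2*r + r)" by (rule gauss_int)
  have eq: "{r..<r+r} = ?S" by (simp add: mult_2)
  have g2: "2 * \<Sum>?S + r = r * (3*r)" using g unfolding eq by simp
  have "r*(3*r-1) = r*(3*r) - r" by (simp add: diff_mult_distrib2)
  hence "2 * \<Sum>?S = r*(3*r-1)" using g2 by linarith
  thus "part_N ?S = r*(3*r-1) div 2" unfolding part_N_def by simp
  have ne: "?S \<noteq> {}" using assms by simp
  have mx: "Max ?S = 2*r-1" using assms by (intro Max_eqI) auto
  have mn: "Min ?S = r" using assms by (intro Min_eqI) auto
  have cd: "part_n ?S = r" unfolding part_n_def by simp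
  thus "part_n ?S = r" .
  show "part_m ?S + part_n ?S = 3*r-1" using cd mx ne assms unfolding part_m_def by simp
  have sg: "sig ?S = r" unfolding sig_def
  proof (rule Least_equality)
    show "Max ?S - r \<notin> ?S" using mx assms by simp
    fix y assume "Max ?S - y \<notin> ?S" thus "r \<le> y" using mx assms by (cases "r \<le> y") auto
  qed
  show "exc ?S" unfolding exc_def using sg mx mn assms by simp
qed

lemma pent2:
  assumes "r \<ge> (1::nat)"
  shows "{r<..2*r} \<in> distinct_partitions" "part_N {r<..2*r} = r*(3*r+1) div 2"
    "part_m {r<..2*r} + part_n {r<..2*r} = 3*r" "part_n {r<..2*r} = r" "exc {r<..2*r}"
proof -
  let ?S = "{r<..2*r}"
  show "?S \<in> distinct_partitions" using assms unfolding distinct_partitions_def by auto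
  have g: "2 * \<Sum>{r+1..<(r+1)+r} + r = r * (2*(r+1) + r)" by (rule gauss_int)
  have eq: "{r+1..<(r+1)+r} = ?S" by auto
  have g2: "2 * \<Sum>?S + r = r * (2*(r+1) + r)" using g unfolding eq .
  hence "2 * \<Sum>?S = r*(3*r+1)" by (simp add: algebra_simps)
  thus "part_N ?S = r*(3*r+1) div 2" unfolding part_N_def by simp
  have ne: "?S \<noteq> {}" using assms by simp
  have mx: "Max ?S = 2*r" using assms by (intro Max_eqI) auto
  have mn: "Min ?S = r+1" using assms by (intro Min_eqI) auto
  have cd: "part_n ?S = r" unfolding part_n_def by simp
  thus "part_n ?S = r" .
  show "part_m ?S + part_n ?S = 3*r" using cd mx ne assms unfolding part_m_def by simp
  have sg: "sig ?S = r" unfolding sig_def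
  proof (rule Least_equality)
    show "Max ?S - r \<notin> ?S" using mx assms by simp
    fix y assume "Max ?S - y \<notin> ?S" thus "r \<le> y" using mx assms by (cases "r \<le> y") auto
  qed
  show "exc ?S" unfolding exc_def using sg mx mn assms by simp
qed

lemma exc_char:
  assumes "S \<in> distinct_partitions" "exc S"
  shows "S = {} \<or> (\<exists>r\<ge>1. S = {r..<2*r}) \<or> (\<exists>r\<ge>1. S = {r<..2*r})"
proof (cases "S = {}")
  case False
  have V: "finite S" "0 \<notin> S" "S \<noteq> {}" using assms False unfolding distinct_partitions_def by auto
  note sp = sig_props[OF V]
  have ge: "\<And>x. x \<in> S \<Longrightarrow> Min S \<le> x" "\<And>x. x \<in> S \<Longrightarrow> x \<le> Max S" using V by auto
  have s1: "Min S \<ge> 1" using V by (metis Min_in less_one not_le)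
  show ?thesis
  proof (cases "Min S \<le> sig S \<and> Max S + 1 = 2 * Min S")
    case True
    have "S = {Min S..<2 * Min S}"
    proof
      show "S \<subseteq> {Min S..<2 * Min S}" using ge True by fastforce
      show "{Min S..<2 * Min S} \<subseteq> S"
      proof
        fix x assume x: "x \<in> {Min S..<2 * Min S}"
        have "Max S - (Max S - x) \<in> S" using sp(2)[of "Max S - x"] x True by auto
        thus "x \<in> S" using x True by simp
      qed
    qed
    thus ?thesis using s1 by blast
  next
    case F: False
    hence T: "sig S < Min S" "Max S = 2 * sig S" using assms(2) V unfolding exc_def by auto
    have "S = {sig S<..2 * sig S}"
    proof
      show "S \<subseteq> {sig S<..2 * sig S}" using ge T by fastforce
      show "{sig S<..2 * sig S} \<subseteq> S"
      proof
        fix x assume x: "x \<in> {sig S<..2 * sig S}"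
        have "Max S - (Max S - x) \<in> S" using sp(2)[of "Max S - x"] x T by auto
        thus "x \<in> S" using x T by simp
      qed
    qed
    thus ?thesis using sp(3) by blast
  qed
qed simp

lemma card_pent: "card {r..<2*r} = r" "card {r<..2*(r::nat)} = r" by simp_all

theorem mainTheorem5:
  fixes k N :: nat
  shows "(\<Sum>p \<in> {p \<in> distinct_partitions. part_N p = N \<and> part_m p + part_n p = k}.
            (-1::int) ^ part_n p)
       = (if k = 0 \<and> N = 0 then 1 else 0)
         + (\<Sum>r \<in> {1..k+1}.
              (if k = 3*r - 1 \<and> N = r*(3*r - 1) div 2 then (-1::int)^r else 0)
            + (if k = 3*r \<and> N = r*(3*r + 1) div 2 then (-1::int)^r else 0))"
proof -
  define A where "A = {p \<in> distinct_partitions. part_N p = N \<and> part_m p + part_n p = k}"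
  define w where "w = (\<lambda>p. (-1::int) ^ part_n p)"
  define B where "B = A \<inter> Collect exc"
  have finA: "finite A"
  proof (rule finite_subset[of _ "Pow {..N}"])
    show "A \<subseteq> Pow {..N}"
    proof
      fix p assume p: "p \<in> A"
      hence "finite p" "\<Sum>p = N" unfolding A_def distinct_partitions_def part_N_def by auto
      hence "\<And>x. x \<in> p \<Longrightarrow> x \<le> N" using member_le_sum[of _ p id] by fastforce
      thus "p \<in> Pow {..N}" by auto
    qed
  qed simp
  have split: "sum w A = sum w B + sum w (A - Collect exc)"
    unfolding B_def by (rule sum.Int_Diff[OF finA])
  have zero: "sum w (A - Collect exc) = 0"
  proof (rule inv_sum_zero[where f = fr])
    fix S assume S: "S \<in> A - Collect exc"
    hence ne: "\<not> exc S" by simp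
    hence "S \<noteq> {}" unfolding exc_def by auto
    hence V: "finite S" "0 \<notin> S" "S \<noteq> {}"
      using S unfolding A_def distinct_partitions_def by auto
    have SA: "part_N S = N" "Max S + card S = k"
      using S V unfolding A_def part_m_def part_n_def by auto
    have "fr S \<in> A - Collect exc \<and> fr (fr S) = S \<and> w (fr S) = - w S"
    proof (cases "Min S \<le> sig S")
      case True
      hence h: "Min S \<le> sig S" "Max S + 1 \<noteq> 2 * Min S" using ne unfolding exc_def by auto
      note u = upL[OF V h]
      have fS: "fr S = up S" using True unfolding fr_def by simp
      have ffS: "fr (up S) = S" using u(5,6,8) unfolding fr_def by simp
      have "up S \<in> A" using u SA V unfolding A_def distinct_partitions_def part_N_def part_m_def part_n_def
        by auto
      moreover have "\<not> exc (up S)" using u(3,6,7) unfolding exc_def by auto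
      moreover have "w (up S) = - w S" unfolding w_def part_n_def u(10)[symmetric] by simp
      ultimately show ?thesis using fS ffS by simp
    next
      case False
      hence h: "sig S < Min S" "Max S \<noteq> 2 * sig S" using ne unfolding exc_def by auto
      note d = downL[OF V h]
      have fS: "fr S = down S" using False unfolding fr_def by simp
      have ffS: "fr (down S) = S" using d(6,8) unfolding fr_def by simp
      have "down S \<in> A" using d SA V unfolding A_def distinct_partitions_def part_N_def part_m_def part_n_def
        by auto
      moreover have "\<not> exc (down S)" using d(3,6,7) unfolding exc_def by auto
      moreover have "w (down S) = - w S" using d(10) unfolding w_def part_n_def by simp
      ultimately show ?thesis using fS ffS by simp
    qed
    thus "fr S \<in> A - Collect exc" "fr (fr S) = S" "w (fr S) = - w S" by auto
  qed
  define P1 where "P1 = (\<lambda>r::nat. {r..<2*r})"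
  define P2 where "P2 = (\<lambda>r::nat. {r<..2*r})"
  define X where "X = {{}} \<union> (P1 ` {1..k+1} \<union> P2 ` {1..k+1})"
  define h where "h = (\<lambda>T. if T \<in> B then w T else 0)"
  have BX: "B \<subseteq> X"
  proof
    fix S assume S: "S \<in> B"
    hence SD: "S \<in> distinct_partitions" "exc S" "part_m S + part_n S = k" unfolding B_def A_def by auto
    from exc_char[OF SD(1,2)] show "S \<in> X"
    proof (elim disjE exE conjE)
      fix r assume r: "r \<ge> 1" "S = {r..<2*r}"
      hence "r \<in> {1..k+1}" using pent1(3)[OF r(1)] SD(3) by auto
      thus ?thesis using r unfolding X_def P1_def by blast
    next
      fix r assume r: "r \<ge> 1" "S = {r<..2*r}"
      hence "r \<in> {1..k+1}" using pent2(3)[OF r(1)] SD(3) by auto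
      thus ?thesis using r unfolding X_def P2_def by blast
    qed (simp add: X_def)
  qed
  have finX: "finite X" unfolding X_def by simp
  have "sum w B = sum h X"
  proof -
    have "sum h X = sum w {x \<in> X. x \<in> B}" unfolding h_def by (rule sum.inter_filter[OF finX, symmetric])
    also have "{x \<in> X. x \<in> B} = B" using BX by auto
    finally show ?thesis by simp
  qed
  also have "sum h X = h {} + (sum h (P1 ` {1..k+1}) + sum h (P2 ` {1..k+1}))"
  proof -
    have d1: "P1 ` {1..k+1} \<inter> P2 ` {1..k+1} = {}"
    proof (rule ccontr)
      assume "P1 ` {1..k+1} \<inter> P2 ` {1..k+1} \<noteq> {}"
      then obtain T where T: "T \<in> P1 ` {1..k+1}" "T \<in> P2 ` {1..k+1}" by blast
      then obtain a where a: "a \<in> {1..k+1}" "T = P1 a" by blast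
      obtain b where b: "b \<in> {1..k+1}" "T = P2 b" using T by blast
      have ab: "a \<in> {1..k+1}" "b \<in> {1..k+1}" "{a..<2*a} = {b<..2*b}"
        using a b unfolding P1_def P2_def by auto
      hence "a = b" using card_pent(1)[of a] card_pent(2)[of b] by simp
      moreover have "a \<in> {a..<2*a}" using ab(1) by simp
      ultimately have "a \<in> {b<..2*b}" using ab(3) by blast
      thus False using \<open>a = b\<close> by simp
    qed
    have d0: "{} \<notin> P1 ` {1..k+1} \<union> P2 ` {1..k+1}" unfolding P1_def P2_def by auto
    have "sum h X = sum h {{}} + sum h (P1 ` {1..k+1} \<union> P2 ` {1..k+1})"
      unfolding X_def by (rule sum.union_disjoint) (use d0 in auto)
    also have "sum h (P1 ` {1..k+1} \<union> P2 ` {1..k+1}) = sum h (P1 ` {1..k+1}) + sum h (P2 ` {1..k+1})"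
      by (rule sum.union_disjoint) (use d1 in auto)
    finally show ?thesis by simp
  qed
  also have "sum h (P1 ` {1..k+1}) = (\<Sum>r \<in> {1..k+1}.
              (if k = 3*r - 1 \<and> N = r*(3*r - 1) div 2 then (-1::int)^r else 0))"
  proof -
    have "inj_on P1 {1..k+1}" unfolding P1_def by (rule inj_onI) (metis card_pent(1))
    hence "sum h (P1 ` {1..k+1}) = sum (h \<circ> P1) {1..k+1}" by (rule sum.reindex)
    also have "\<dots> = (\<Sum>r \<in> {1..k+1}.
              (if k = 3*r - 1 \<and> N = r*(3*r - 1) div 2 then (-1::int)^r else 0))"
    proof (rule sum.cong[OF refl])
      fix r :: nat assume "r \<in> {1..k+1}"
      hence r: "r \<ge> 1" by simp
      note pp = pent1[OF r]
      show "(h \<circ> P1) r = (if k = 3*r - 1 \<and> N = r*(3*r - 1) div 2 then (-1::int)^r else 0)"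
        unfolding h_def B_def A_def P1_def w_def o_def using pp by auto
    qed
    finally show ?thesis .
  qed
  also have "sum h (P2 ` {1..k+1}) = (\<Sum>r \<in> {1..k+1}.
              (if k = 3*r \<and> N = r*(3*r + 1) div 2 then (-1::int)^r else 0))"
  proof -
    have "inj_on P2 {1..k+1}" unfolding P2_def by (rule inj_onI) (metis card_pent(2))
    hence "sum h (P2 ` {1..k+1}) = sum (h \<circ> P2) {1..k+1}" by (rule sum.reindex)
    also have "\<dots> = (\<Sum>r \<in> {1..k+1}.
              (if k = 3*r \<and> N = r*(3*r + 1) div 2 then (-1::int)^r else 0))"
    proof (rule sum.cong[OF refl])
      fix r :: nat assume "r \<in> {1..k+1}"
      hence r: "r \<ge> 1" by simp
      note pp = pent2[OF r]
      show "(h \<circ> P2) r = (if k = 3*r \<and> N = r*(3*r + 1) div 2 then (-1::int)^r else 0)"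
        unfolding h_def B_def A_def P2_def w_def o_def using pp by auto
    qed
    finally show ?thesis .
  qed
  also have "h {} = (if k = 0 \<and> N = 0 then 1 else 0)"
    unfolding h_def B_def A_def w_def exc_def distinct_partitions_def part_N_def part_m_def part_n_def
    by auto
  finally have "sum w B = (if k = 0 \<and> N = 0 then 1 else 0) + (\<Sum>r \<in> {1..k+1}.
              (if k = 3*r - 1 \<and> N = r*(3*r - 1) div 2 then (-1::int)^r else 0)
            + (if k = 3*r \<and> N = r*(3*r + 1) div 2 then (-1::int)^r else 0))"
    by (simp add: sum.distrib)
  thus ?thesis using split zero unfolding A_def w_def by simp
qed

end
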